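(* Let $n,k$ be positive integers, let $T:M_n(\mathbb{C})\to M_n(\mathbb{C})$ be a UCPT$(n)$-Schur multiplier and $S:M_k(\mathbb{C})\to M_k(\mathbb{C})$ a UCPT$(k)$-Schur multiplier. Then $T\otimes S\in\mathrm{conv}(\mathrm{Aut}(M_n(\mathbb{C})\otimes M_k(\mathbb{C})))$ if and only if $T\in\mathrm{conv}(\mathrm{Aut}(M_n(\mathbb{C})))$ and $S\in\mathrm{conv}(\mathrm{Aut}(M_k(\mathbb{C})))$.
   Context: A UCPT$(n)$-map is a unital completely positive trace-preserving linear map on $M_n(\mathbb{C})$. A UCPT$(n)$-Schur multiplier is a UCPT$(n)$-map of the form $x=(x_{ij})\mapsto (b_{ij}x_{ij})$ for some fixed matrix $(b_{ij})\in M_n(\mathbb{C})$. $\mathrm{Aut}(M_m(\mathbb{C}))$ is the set of maps $x\mapsto u^*xu$ with $u$ unitary, $\mathrm{conv}$ denotes convex hull, and $M_n(\mathbb{C})\otimes M_k(\mathbb{C})$ is identified with $M_{nk}(\mathbb{C})$. *)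

theory Defs
  imports "HOL-Analysis.Analysis"
begin

text \<open>M_n(C) (x) M_k(C) is identified with the matrices indexed by
  the finite type 'n \<times> 'k, the Kronecker product being A (x) B = [A_ii' B_jj'].\<close>

type_synonym 'n cmat = "complex^'n^'n"

definition adj :: "'n cmat \<Rightarrow> 'n::finite cmat" where
  "adj u = (\<chi> i j. cnj (u $ j $ i))"

definition unitary_mat :: "'n::finite cmat \<Rightarrow> bool" where
  "unitary_mat u \<longleftrightarrow> adj u ** u = mat 1 \<and> u ** adj u = mat 1"

definition mtrace :: "'n::finite cmat \<Rightarrow> complex" where
  "mtrace x = (\<Sum>i\<in>UNIV. x $ i $ i)"

definition cmat_scale :: "complex \<Rightarrow> 'n::finite cmat \<Rightarrow> 'n cmat" where
  "cmat_scale c x = (\<chi> i j. c * x $ i $ j)"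

definition clinear_map :: "('n::finite cmat \<Rightarrow> 'n cmat) \<Rightarrow> bool" where
  "clinear_map T \<longleftrightarrow> (\<forall>x y. T (x + y) = T x + T y) \<and> (\<forall>c x. T (cmat_scale c x) = cmat_scale c (T x))"

text \<open>Positive semidefiniteness of an m \<times> m block matrix with blocks X p q in M_n(C)
  (i.e. of an element of M_m(M_n(C)) = M_m(C) (x) M_n(C)): v^* X v >= 0 for all v.\<close>
definition block_psd :: "nat \<Rightarrow> (nat \<Rightarrow> nat \<Rightarrow> 'n::finite cmat) \<Rightarrow> bool" where
  "block_psd m X \<longleftrightarrow> (\<forall>v :: nat \<Rightarrow> complex^'n.
     (let s = (\<Sum>p<m. \<Sum>q<m. \<Sum>i\<in>UNIV. \<Sum>j\<in>UNIV. cnj (v p $ i) * X p q $ i $ j * v q $ j)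
      in s \<in> \<real> \<and> 0 \<le> Re s))"

text \<open>Complete positivity: id_m (x) T is positive for every m.\<close>
definition completely_positive :: "('n::finite cmat \<Rightarrow> 'n cmat) \<Rightarrow> bool" where
  "completely_positive T \<longleftrightarrow>
     (\<forall>m X. block_psd m X \<longrightarrow> block_psd m (\<lambda>p q. T (X p q)))"

definition ucpt :: "('n::finite cmat \<Rightarrow> 'n cmat) \<Rightarrow> bool" where
  "ucpt T \<longleftrightarrow> clinear_map T \<and> T (mat 1) = mat 1 \<and> completely_positive T
      \<and> (\<forall>x. mtrace (T x) = mtrace x)"

definition ucpt_schur :: "('n::finite cmat \<Rightarrow> 'n cmat) \<Rightarrow> bool" where
  "ucpt_schur T \<longleftrightarrow> ucpt T \<and> (\<exists>b::'n cmat. \<forall>x. T x = (\<chi> i j. b $ i $ j * x $ i $ j))"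

definition Aut :: "('n::finite cmat \<Rightarrow> 'n cmat) set" where
  "Aut = {\<lambda>x. adj u ** x ** u | u. unitary_mat u}"

definition conv_maps :: "('n::finite cmat \<Rightarrow> 'n cmat) set \<Rightarrow> ('n cmat \<Rightarrow> 'n cmat) set" where
  "conv_maps A = {T. \<exists>(N::nat) (p::nat \<Rightarrow> real) \<Phi>.
      (\<forall>l<N. 0 \<le> p l \<and> \<Phi> l \<in> A) \<and> (\<Sum>l<N. p l) = 1 \<and>
      (\<forall>x. T x = (\<Sum>l<N. p l *\<^sub>R \<Phi> l x))}"

definition kron :: "'n::finite cmat \<Rightarrow> 'k::finite cmat \<Rightarrow> ('n \<times> 'k) cmat" where
  "kron a b = (\<chi> r s. a $ fst r $ fst s * b $ snd r $ snd s)"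

definition unit_mat :: "'n \<Rightarrow> 'n \<Rightarrow> 'n::finite cmat" where
  "unit_mat i j = (\<chi> r s. if r = i \<and> s = j then 1 else 0)"

definition tensor_map :: "('n::finite cmat \<Rightarrow> 'n cmat) \<Rightarrow> ('k::finite cmat \<Rightarrow> 'k cmat)
    \<Rightarrow> ('n \<times> 'k) cmat \<Rightarrow> ('n \<times> 'k) cmat" where
  "tensor_map T S x = (\<Sum>i\<in>UNIV. \<Sum>i'\<in>UNIV. \<Sum>j\<in>UNIV. \<Sum>j'\<in>UNIV.
      cmat_scale (x $ (i, j) $ (i', j')) (kron (T (unit_mat i i')) (S (unit_mat j j'))))"

end

theory Submission
  imports Defs
begin


lemma mat_eqI: "(\<And>i j. A $ i $ j = B $ i $ j) \<Longrightarrow> A = B"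
  by (simp add: vec_eq_iff)

lemma mm_entry: "(a ** b) $ i $ j = (\<Sum>k\<in>UNIV. a $ i $ k * b $ k $ j)"
  by (simp add: matrix_matrix_mult_def)

lemma Ad_entry: "(adj u ** x ** u) $ a $ c = (\<Sum>k\<in>UNIV. \<Sum>k'\<in>UNIV. cnj (u $ k $ a) * x $ k $ k' * u $ k' $ c)"
proof -
  have "(adj u ** x ** u) $ a $ c = (\<Sum>k'\<in>UNIV. \<Sum>k\<in>UNIV. cnj (u $ k $ a) * x $ k $ k' * u $ k' $ c)"
    unfolding mm_entry by (simp add: adj_def sum_distrib_right)
  also have "\<dots> = (\<Sum>k\<in>UNIV. \<Sum>k'\<in>UNIV. cnj (u $ k $ a) * x $ k $ k' * u $ k' $ c)"
    by (rule sum.swap)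
  finally show ?thesis .
qed

lemma sum2_delta: "(\<Sum>k\<in>UNIV. \<Sum>k'\<in>UNIV. if k = i \<and> k' = i' then f k k' else 0) = (f i i' :: 'c::comm_monoid_add)"
  for i :: "'a::finite" and i' :: "'b::finite"
proof -
  have "\<And>k. (\<Sum>k'\<in>UNIV. if k = i \<and> k' = i' then f k k' else 0) = (if k = i then f k i' else 0)"
    by (cases "k = i") auto
  then show ?thesis by simp
qed

lemma Ad_unit: "(adj u ** unit_mat i i' ** u) $ a $ c = cnj (u $ i $ a) * u $ i' $ c"
proof -
  have h: "\<And>k k'. cnj (u $ k $ a) * unit_mat i i' $ k $ k' * u $ k' $ c =
    (if k = i \<and> k' = i' then cnj (u $ k $ a) * u $ k' $ c else 0)"
    by (simp add: unit_mat_def)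
  show ?thesis unfolding Ad_entry h by (rule sum2_delta)
qed

lemma sum_pair_UNIV: "(\<Sum>r\<in>UNIV. f r) = (\<Sum>i\<in>UNIV. \<Sum>j\<in>UNIV. f (i, j))"
  for f :: "'a::finite \<times> 'b::finite \<Rightarrow> 'c::comm_monoid_add"
proof -
  have "(\<Sum>r\<in>UNIV. f r) = (\<Sum>r\<in>UNIV \<times> UNIV. f r)" by (simp only: UNIV_Times_UNIV)
  also have "\<dots> = (\<Sum>i\<in>UNIV. \<Sum>j\<in>UNIV. f (i, j))" by (simp add: sum.cartesian_product)
  finally show ?thesis .
qed

lemma pull2: "(\<Sum>i\<in>A. \<Sum>l\<in>L. \<Sum>m\<in>M. f i l m) = (\<Sum>l\<in>L. \<Sum>m\<in>M. \<Sum>i\<in>A. (f i l m :: 'c::comm_monoid_add))"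
  by (simp add: sum.swap[of _ A])

lemma core:
  fixes x :: "'a::finite \<Rightarrow> 'b::finite \<Rightarrow> 'a \<Rightarrow> 'b \<Rightarrow> complex"
  shows "(\<Sum>i\<in>UNIV. \<Sum>i'\<in>UNIV. \<Sum>j\<in>UNIV. \<Sum>j'\<in>UNIV. x i j i' j' *
     ((\<Sum>l\<in>L. P l * (A l i * A' l i')) * (\<Sum>m\<in>M. Q m * (B m j * B' m j'))))
   = (\<Sum>l\<in>L. \<Sum>m\<in>M. (P l * Q m) * (\<Sum>i\<in>UNIV. \<Sum>j\<in>UNIV. \<Sum>i'\<in>UNIV. \<Sum>j'\<in>UNIV.
        (A l i * B m j) * x i j i' j' * (A' l i' * B' m j')))" (is "?L = ?R")
proof -
  have s1: "?L = (\<Sum>i\<in>UNIV. \<Sum>i'\<in>UNIV. \<Sum>j\<in>UNIV. \<Sum>j'\<in>UNIV. \<Sum>l\<in>L. \<Sum>m\<in>M. x i j i' j' *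
     ((P l * (A l i * A' l i')) * (Q m * (B m j * B' m j'))))"
    unfolding sum_product by (unfold sum_distrib_left) (rule refl)
  have s2: "?R = (\<Sum>l\<in>L. \<Sum>m\<in>M. \<Sum>i\<in>UNIV. \<Sum>i'\<in>UNIV. \<Sum>j\<in>UNIV. \<Sum>j'\<in>UNIV. (P l * Q m) * (
        (A l i * B m j) * x i j i' j' * (A' l i' * B' m j')))"
  proof -
    have "?R = (\<Sum>l\<in>L. \<Sum>m\<in>M. \<Sum>i\<in>UNIV. \<Sum>j\<in>UNIV. \<Sum>i'\<in>UNIV. \<Sum>j'\<in>UNIV. (P l * Q m) * (
        (A l i * B m j) * x i j i' j' * (A' l i' * B' m j')))"
      by (unfold sum_distrib_left) (rule refl)
    also have "\<dots> = (\<Sum>l\<in>L. \<Sum>m\<in>M. \<Sum>i\<in>UNIV. \<Sum>i'\<in>UNIV. \<Sum>j\<in>UNIV. \<Sum>j'\<in>UNIV. (P l * Q m) * (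
        (A l i * B m j) * x i j i' j' * (A' l i' * B' m j')))"
      apply (rule sum.cong[OF refl])
      apply (rule sum.cong[OF refl])
      apply (rule sum.cong[OF refl])
      apply (rule sum.swap)
      done
    finally show ?thesis .
  qed
  have e: "\<And>i j i' j' l m. x i j i' j' * ((P l * (A l i * A' l i')) * (Q m * (B m j * B' m j')))
       = (P l * Q m) * ((A l i * B m j) * x i j i' j' * (A' l i' * B' m j'))"
    by (simp only: mult_ac)
  show ?thesis unfolding s1 s2 pull2[where L=L and M=M] by (simp only: e)
qed

lemma mat1_entry: "(mat 1 :: 'a::finite cmat) $ a $ c = (if a = c then 1 else 0)"
  by (simp add: mat_def)

lemma adjmult_entry: "(adj u ** v) $ a $ c = (\<Sum>i\<in>UNIV. cnj (u $ i $ a) * v $ i $ c)"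
  by (simp add: mm_entry adj_def)

lemma unitary_kron:
  assumes "unitary_mat u" "unitary_mat v"
  shows "unitary_mat (kron u v)"
proof -
  have u: "\<And>a c. (\<Sum>i\<in>UNIV. cnj (u $ i $ a) * u $ i $ c) = (if a = c then 1 else 0)"
  proof -
    fix a c
    have "(adj u ** u) $ a $ c = mat 1 $ a $ c" using assms(1) unfolding unitary_mat_def by simp
    then show "(\<Sum>i\<in>UNIV. cnj (u $ i $ a) * u $ i $ c) = (if a = c then 1 else 0)"
      unfolding adjmult_entry mat1_entry .
  qed
  have v: "\<And>a c. (\<Sum>i\<in>UNIV. cnj (v $ i $ a) * v $ i $ c) = (if a = c then 1 else 0)"
  proof -
    fix a c
    have "(adj v ** v) $ a $ c = mat 1 $ a $ c" using assms(2) unfolding unitary_mat_def by simp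
    then show "(\<Sum>i\<in>UNIV. cnj (v $ i $ a) * v $ i $ c) = (if a = c then 1 else 0)"
      unfolding adjmult_entry mat1_entry .
  qed
  have "adj (kron u v) ** kron u v = mat 1"
  proof (rule mat_eqI)
    fix r s :: "'a \<times> 'b"
    obtain a b c d where rs: "r = (a, b)" "s = (c, d)" by fastforce
    have "(adj (kron u v) ** kron u v) $ r $ s =
      (\<Sum>i\<in>UNIV. \<Sum>j\<in>UNIV. (cnj (u $ i $ a) * u $ i $ c) * (cnj (v $ j $ b) * v $ j $ d))"
    proof -
      have k: "\<And>i j. cnj (kron u v $ (i,j) $ (a,b)) * kron u v $ (i,j) $ (c,d) = (cnj (u$i$a) * u$i$c) * (cnj (v$j$b) * v$j$d)"
        by (simp add: kron_def mult_ac)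
      show ?thesis unfolding adjmult_entry sum_pair_UNIV rs k ..
    qed
    also have "\<dots> = (\<Sum>i\<in>UNIV. cnj (u $ i $ a) * u $ i $ c) * (\<Sum>j\<in>UNIV. cnj (v $ j $ b) * v $ j $ d)"
      by (simp add: sum_product)
    also have "\<dots> = mat 1 $ r $ s" unfolding u v mat1_entry rs by simp
    finally show "(adj (kron u v) ** kron u v) $ r $ s = mat 1 $ r $ s" .
  qed
  then show ?thesis unfolding unitary_mat_def using matrix_left_right_inverse by blast
qed

lemma conv_maps_AutE:
  fixes T :: "'n::finite cmat \<Rightarrow> 'n cmat"
  assumes "T \<in> conv_maps Aut"
  obtains N :: nat and p :: "nat \<Rightarrow> real" and u :: "nat \<Rightarrow> 'n cmat" where "\<forall>l<N. 0 \<le> p l \<and> unitary_mat (u l)" "(\<Sum>l<N. p l) = 1"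
    "\<forall>x. T x = (\<Sum>l<N. p l *\<^sub>R (adj (u l) ** x ** u l))"
proof -
  obtain N and p :: "nat \<Rightarrow> real" and \<Phi> :: "nat \<Rightarrow> 'n cmat \<Rightarrow> 'n cmat" where h: "\<forall>l<N. 0 \<le> p l \<and> \<Phi> l \<in> Aut" "(\<Sum>l<N. p l) = 1"
      "\<forall>x. T x = (\<Sum>l<N. p l *\<^sub>R \<Phi> l x)"
    using assms unfolding conv_maps_def by blast
  have "\<forall>l. \<exists>u. l < N \<longrightarrow> unitary_mat u \<and> \<Phi> l = (\<lambda>x. adj u ** x ** u)"
    using h(1) unfolding Aut_def by auto
  then have "\<exists>u. \<forall>l. l < N \<longrightarrow> unitary_mat (u l) \<and> \<Phi> l = (\<lambda>x. adj (u l) ** x ** u l)"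
    by (rule choice)
  then obtain u where u: "\<forall>l. l < N \<longrightarrow> unitary_mat (u l) \<and> \<Phi> l = (\<lambda>x. adj (u l) ** x ** u l)"
    by blast
  show ?thesis
  proof (rule that[of N p u])
    show "\<forall>x. T x = (\<Sum>l<N. p l *\<^sub>R (adj (u l) ** x ** u l))"
      using h(3) u by simp
  qed (use h u in auto)
qed

lemma conv_entry:
  assumes "\<forall>y. T y = (\<Sum>l\<in>I. p l *\<^sub>R (adj (u l) ** y ** u l))"
  shows "T y $ a $ c = (\<Sum>l\<in>I. complex_of_real (p l) * (adj (u l) ** y ** u l) $ a $ c)"
proof -
  have "T y $ a $ c = (\<Sum>l\<in>I. p l *\<^sub>R ((adj (u l) ** y ** u l) $ a $ c))"
    using assms by simp
  then show ?thesis by (simp add: scaleR_conv_of_real)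
qed

lemma adj_one: "adj (mat 1) = mat 1"
  by (simp add: adj_def mat_def vec_eq_iff)

lemma unitary_one: "unitary_mat (mat 1)"
  by (simp add: unitary_mat_def adj_one matrix_mul_lid)

lemma sum_range_inj:
  fixes e :: "'a::finite \<Rightarrow> 'b::finite"
  assumes "inj e" "\<And>r. r \<notin> range e \<Longrightarrow> g r = 0"
  shows "(\<Sum>r\<in>UNIV. g r) = (\<Sum>i\<in>UNIV. g (e i))"
proof -
  have "(\<Sum>r\<in>UNIV. g r) = (\<Sum>r\<in>range e. g r)"
    by (rule sum.mono_neutral_right) (use assms in auto)
  also have "\<dots> = (\<Sum>i\<in>UNIV. g (e i))" by (simp add: sum.reindex assms(1))
  finally show ?thesis .
qed

lemma conv_maps_finI:
  assumes "finite I" "\<forall>l\<in>I. 0 \<le> p l \<and> \<Phi> l \<in> A" "sum p I = 1"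
    "\<forall>x. T x = (\<Sum>l\<in>I. p l *\<^sub>R \<Phi> l x)"
  shows "T \<in> conv_maps A"
proof -
  obtain h where h: "bij_betw h {0..<card I} I" using ex_bij_betw_nat_finite assms(1) by blast
  have hs: "\<And>f. (\<Sum>l<card I. f (h l)) = sum f I"
    using sum.reindex_bij_betw[OF h] by (simp add: atLeast0LessThan)
  have hi: "\<And>l. l < card I \<Longrightarrow> h l \<in> I" using h by (auto simp: bij_betw_def)
  show ?thesis unfolding conv_maps_def
    apply (rule CollectI, rule exI[of _ "card I"], rule exI[of _ "p \<circ> h"], rule exI[of _ "\<Phi> \<circ> h"])
  proof (intro conjI allI impI)
    fix x show "T x = (\<Sum>l<card I. (p \<circ> h) l *\<^sub>R (\<Phi> \<circ> h) l x)"
      using assms(4) hs[of "\<lambda>l. p l *\<^sub>R \<Phi> l x"] by simp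
  qed (use assms hi hs[of p] in auto)
qed



lemma sum_times: "(\<Sum>lm\<in>A \<times> B. F lm) = (\<Sum>l\<in>A. \<Sum>m\<in>B. F (l, m))"
  by (simp add: sum.cartesian_product)

lemma tensor_conv:
  fixes T :: "'n::finite cmat \<Rightarrow> 'n cmat" and S :: "'k::finite cmat \<Rightarrow> 'k cmat"
  assumes "T \<in> conv_maps Aut" "S \<in> conv_maps Aut"
  shows "tensor_map T S \<in> conv_maps Aut"
proof -
  obtain N :: nat and p :: "nat \<Rightarrow> real" and u :: "nat \<Rightarrow> 'n cmat" where hT: "\<forall>l<N. 0 \<le> p l \<and> unitary_mat (u l)" "(\<Sum>l<N. p l) = 1"
    "\<forall>x. T x = (\<Sum>l<N. p l *\<^sub>R (adj (u l) ** x ** u l))"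
    using conv_maps_AutE[OF assms(1)] by blast
  obtain M :: nat and q :: "nat \<Rightarrow> real" and v :: "nat \<Rightarrow> 'k cmat" where hS: "\<forall>l<M. 0 \<le> q l \<and> unitary_mat (v l)" "(\<Sum>l<M. q l) = 1"
    "\<forall>x. S x = (\<Sum>l<M. q l *\<^sub>R (adj (v l) ** x ** v l))"
    using conv_maps_AutE[OF assms(2)] by blast
  have Tu: "T (unit_mat i i') $ a $ c = (\<Sum>l<N. of_real (p l) * (cnj (u l $ i $ a) * u l $ i' $ c))" for i i' a c
    unfolding conv_entry[OF hT(3)] Ad_unit ..
  have Sv: "S (unit_mat j j') $ b $ d = (\<Sum>m<M. of_real (q m) * (cnj (v m $ j $ b) * v m $ j' $ d))" for j j' b d
    unfolding conv_entry[OF hS(3)] Ad_unit ..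
  show ?thesis
  proof (rule conv_maps_finI[where I = "{..<N} \<times> {..<M}" and p = "\<lambda>(l,m). p l * q m"
      and \<Phi> = "\<lambda>(l,m) x. adj (kron (u l) (v m)) ** x ** kron (u l) (v m)"])
    show "finite ({..<N} \<times> {..<M})" by simp
    show "\<forall>lm\<in>{..<N} \<times> {..<M}. 0 \<le> (case lm of (l, m) \<Rightarrow> p l * q m) \<and>
        (case lm of (l, m) \<Rightarrow> \<lambda>x. adj (kron (u l) (v m)) ** x ** kron (u l) (v m)) \<in> Aut"
      using hT(1) hS(1) unitary_kron unfolding Aut_def by fastforce
    have "(\<Sum>lm\<in>{..<N} \<times> {..<M}. case lm of (l, m) \<Rightarrow> p l * q m) = (\<Sum>l<N. \<Sum>m<M. p l * q m)"
      by (rule sum.cartesian_product[symmetric])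
    also have "\<dots> = 1" using hT(2) hS(2) by (simp add: sum_product[symmetric])
    finally show "(\<Sum>lm\<in>{..<N} \<times> {..<M}. case lm of (l, m) \<Rightarrow> p l * q m) = 1" .
    show "\<forall>x. tensor_map T S x = (\<Sum>lm\<in>{..<N} \<times> {..<M}. (case lm of (l, m) \<Rightarrow> p l * q m) *\<^sub>R
        (case lm of (l, m) \<Rightarrow> \<lambda>x. adj (kron (u l) (v m)) ** x ** kron (u l) (v m)) x)"
    proof (intro allI mat_eqI)
      fix x r s
      obtain a c :: 'n and b d :: 'k where rs: "r = (a, b)" "s = (c, d)" by fastforce
      have L: "tensor_map T S x $ r $ s = (\<Sum>i\<in>UNIV. \<Sum>i'\<in>UNIV. \<Sum>j\<in>UNIV. \<Sum>j'\<in>UNIV. x $ (i,j) $ (i',j') *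
         ((\<Sum>l<N. of_real (p l) * (cnj (u l $ i $ a) * u l $ i' $ c)) *
          (\<Sum>m<M. of_real (q m) * (cnj (v m $ j $ b) * v m $ j' $ d))))"
        unfolding rs tensor_map_def Tu[symmetric] Sv[symmetric]
        by (simp add: cmat_scale_def kron_def)
      have R: "(\<Sum>lm\<in>{..<N} \<times> {..<M}. (case lm of (l, m) \<Rightarrow> p l * q m) *\<^sub>R
        (case lm of (l, m) \<Rightarrow> \<lambda>x. adj (kron (u l) (v m)) ** x ** kron (u l) (v m)) x) $ r $ s
        = (\<Sum>l<N. \<Sum>m<M. (of_real (p l) * of_real (q m)) * (\<Sum>i\<in>UNIV. \<Sum>j\<in>UNIV. \<Sum>i'\<in>UNIV. \<Sum>j'\<in>UNIV.
        (cnj (u l $ i $ a) * cnj (v m $ j $ b)) * x $ (i,j) $ (i',j') * (u l $ i' $ c * v m $ j' $ d)))"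
        unfolding sum_times rs
        by (simp add: Ad_entry sum_pair_UNIV kron_def, simp add: scaleR_conv_of_real)
      show "tensor_map T S x $ r $ s = (\<Sum>lm\<in>{..<N} \<times> {..<M}. (case lm of (l, m) \<Rightarrow> p l * q m) *\<^sub>R
        (case lm of (l, m) \<Rightarrow> \<lambda>x. adj (kron (u l) (v m)) ** x ** kron (u l) (v m)) x) $ r $ s"
        unfolding L R by (rule core)
    qed
  qed
qed


definition emb :: "('n::finite \<Rightarrow> 'm::finite) \<Rightarrow> 'n cmat \<Rightarrow> 'm cmat" where
  "emb e x = (\<chi> r s. if r \<in> range e \<and> s \<in> range e then x $ inv e r $ inv e s else 0)"

lemma emb_in: "inj e \<Longrightarrow> emb e x $ e i $ e i' = x $ i $ i'"
  by (simp add: emb_def)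

lemma emb_out: "r \<notin> range e \<or> s \<notin> range e \<Longrightarrow> emb e x $ r $ s = 0"
  by (auto simp add: emb_def)

lemma Ad_emb:
  fixes e :: "'n::finite \<Rightarrow> 'm::finite"
  assumes "inj e"
  shows "(adj w ** emb e x ** w) $ e a $ e c = (adj (\<chi> i j. w $ e i $ e j) ** x ** (\<chi> i j. w $ e i $ e j)) $ a $ c"
proof -
  have inner: "(\<Sum>k'\<in>UNIV. cnj (w $ k $ e a) * emb e x $ k $ k' * w $ k' $ e c)
     = (\<Sum>i'\<in>UNIV. cnj (w $ k $ e a) * emb e x $ k $ e i' * w $ e i' $ e c)" for k
    by (rule sum_range_inj[OF assms]) (simp add: emb_out)
  have "(adj w ** emb e x ** w) $ e a $ e c = (\<Sum>k\<in>UNIV. \<Sum>i'\<in>UNIV. cnj (w $ k $ e a) * emb e x $ k $ e i' * w $ e i' $ e c)"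
    unfolding Ad_entry inner ..
  also have "\<dots> = (\<Sum>i\<in>UNIV. \<Sum>i'\<in>UNIV. cnj (w $ e i $ e a) * emb e x $ e i $ e i' * w $ e i' $ e c)"
    by (rule sum_range_inj[OF assms]) (simp add: emb_out)
  also have "\<dots> = (adj (\<chi> i j. w $ e i $ e j) ** x ** (\<chi> i j. w $ e i $ e j)) $ a $ c"
    unfolding Ad_entry by (simp add: emb_in[OF assms])
  finally show ?thesis .
qed

lemma cnj_sq: "cnj z * z = complex_of_real ((cmod z)^2)"
  by (subst complex_norm_square) (simp add: mult.commute)

lemma compress:
  fixes e :: "'n::finite \<Rightarrow> 'm::finite" and T :: "'n cmat \<Rightarrow> 'n cmat" and \<Phi> :: "'m cmat \<Rightarrow> 'm cmat"
  assumes inj: "inj e" and \<Phi>: "\<Phi> \<in> conv_maps Aut" and unital: "T (mat 1) = mat 1"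
    and rel: "\<And>x a c. T x $ a $ c = \<Phi> (emb e x) $ e a $ e c"
  shows "T \<in> conv_maps Aut"
proof -
  obtain N :: nat and p :: "nat \<Rightarrow> real" and w :: "nat \<Rightarrow> 'm cmat" where
    h: "\<forall>l<N. 0 \<le> p l \<and> unitary_mat (w l)" "(\<Sum>l<N. p l) = 1"
    "\<forall>x. \<Phi> x = (\<Sum>l<N. p l *\<^sub>R (adj (w l) ** x ** w l))"
    using conv_maps_AutE[OF \<Phi>] by blast
  define a where "a l = (\<chi> i j. w l $ e i $ e j)" for l
  have Tent: "T x $ a0 $ c0 = (\<Sum>l<N. complex_of_real (p l) * (adj (a l) ** x ** a l) $ a0 $ c0)" for x a0 c0
    unfolding rel conv_entry[OF h(3)] Ad_emb[OF inj] a_def ..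
  have wcol: "(\<Sum>r\<in>UNIV. (cmod (w l $ r $ c0))^2) = 1" if "l < N" for l c0
  proof -
    have "(adj (w l) ** w l) $ c0 $ c0 = mat 1 $ c0 $ c0" using h(1) that unfolding unitary_mat_def by simp
    then have "(\<Sum>r\<in>UNIV. cnj (w l $ r $ c0) * w l $ r $ c0) = 1"
      unfolding adjmult_entry mat1_entry by simp
    then have "complex_of_real (\<Sum>r\<in>UNIV. (cmod (w l $ r $ c0))^2) = 1"
      unfolding cnj_sq of_real_sum .
    then show ?thesis by (simp only: of_real_eq_1_iff)
  qed
  define Sin where "Sin l c0 = (\<Sum>i\<in>UNIV. (cmod (w l $ e i $ e c0))^2)" for l c0
  define D where "D l c0 = (\<Sum>r\<in>- range e. (cmod (w l $ r $ e c0))^2)" for l c0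
  have split: "Sin l c0 + D l c0 = 1" if "l < N" for l c0
  proof -
    have "(\<Sum>r\<in>UNIV. (cmod (w l $ r $ e c0))^2) = (\<Sum>r\<in>range e. (cmod (w l $ r $ e c0))^2) + D l c0"
    proof -
      have "(\<Sum>r\<in>UNIV. (cmod (w l $ r $ e c0))^2) = (\<Sum>r\<in>UNIV - range e. (cmod (w l $ r $ e c0))^2) + (\<Sum>r\<in>range e. (cmod (w l $ r $ e c0))^2)"
        by (rule sum.subset_diff) auto
      then show ?thesis unfolding D_def Compl_eq_Diff_UNIV by (simp only: add.commute)
    qed
    moreover have "(\<Sum>r\<in>range e. (cmod (w l $ r $ e c0))^2) = Sin l c0"
      unfolding Sin_def by (simp add: sum.reindex inj)
    ultimately show ?thesis using wcol[OF that] by simp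
  qed
  have un: "(\<Sum>l<N. p l * Sin l c0) = 1" for c0
  proof -
    have "T (mat 1) $ c0 $ c0 = 1" using unital by (simp add: mat1_entry)
    then have "(\<Sum>l<N. complex_of_real (p l) * (\<Sum>i\<in>UNIV. cnj (a l $ i $ c0) * a l $ i $ c0)) = 1"
      unfolding Tent matrix_mul_rid adjmult_entry .
    then have "complex_of_real (\<Sum>l<N. p l * Sin l c0) = 1"
      unfolding cnj_sq Sin_def a_def of_real_sum of_real_mult by simp
    then show ?thesis by (simp only: of_real_eq_1_iff)
  qed
  have D0: "p l * D l c0 = 0" if "l < N" for l c0
  proof -
    have "(\<Sum>l<N. p l * D l c0) = (\<Sum>l<N. p l - p l * Sin l c0)"
    proof (rule sum.cong[OF refl])
      fix l assume "l \<in> {..<N}"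
      then have "D l c0 = 1 - Sin l c0" using split[of l c0] by simp
      then show "p l * D l c0 = p l - p l * Sin l c0" by (simp add: right_diff_distrib)
    qed
    also have "\<dots> = 0" using h(2) un[of c0] by (simp add: sum_subtractf)
    finally have "(\<Sum>l<N. p l * D l c0) = 0" .
    moreover have "\<forall>l\<in>{..<N}. 0 \<le> p l * D l c0" using h(1) unfolding D_def by (simp add: sum_nonneg)
    ultimately show ?thesis using that sum_nonneg_eq_0_iff[of "{..<N}" "\<lambda>l. p l * D l c0"] by simp
  qed
  have wzero: "w l $ r $ e c0 = 0" if "l < N" "p l \<noteq> 0" "r \<notin> range e" for l r c0
  proof -
    have "D l c0 = 0" using D0[OF that(1)] that(2) by simp
    then have "\<forall>r\<in>- range e. (cmod (w l $ r $ e c0))^2 = 0"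
      unfolding D_def by (subst sum_nonneg_eq_0_iff[symmetric]) auto
    then show ?thesis using that(3) by simp
  qed
  have aunit: "unitary_mat (a l)" if "l < N" "p l \<noteq> 0" for l
  proof -
    have "adj (a l) ** a l = mat 1"
    proof (rule mat_eqI)
      fix a0 c0
      have "(adj (a l) ** a l) $ a0 $ c0 = (\<Sum>i\<in>UNIV. cnj (w l $ e i $ e a0) * w l $ e i $ e c0)"
        unfolding adjmult_entry a_def by simp
      also have "\<dots> = (\<Sum>r\<in>UNIV. cnj (w l $ r $ e a0) * w l $ r $ e c0)"
        by (rule sum_range_inj[OF inj, symmetric]) (simp add: wzero[OF that])
      also have "\<dots> = (adj (w l) ** w l) $ e a0 $ e c0" unfolding adjmult_entry ..
      also have "\<dots> = mat 1 $ a0 $ c0"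
        using h(1) that(1) inj unfolding unitary_mat_def by (simp add: mat1_entry inj_eq)
      finally show "(adj (a l) ** a l) $ a0 $ c0 = mat 1 $ a0 $ c0" .
    qed
    then show ?thesis unfolding unitary_mat_def using matrix_left_right_inverse by blast
  qed
  define a' where "a' l = (if p l = 0 then mat 1 else a l)" for l
  show ?thesis
  proof (rule conv_maps_finI[where I = "{..<N}" and p = p and \<Phi> = "\<lambda>l x. adj (a' l) ** x ** a' l"])
    show "\<forall>l\<in>{..<N}. 0 \<le> p l \<and> (\<lambda>x. adj (a' l) ** x ** a' l) \<in> Aut"
    proof -
      have a'u: "unitary_mat (a' l)" if "l < N" for l
        using aunit[OF that] by (simp add: a'_def unitary_one)
      have mem: "\<And>U. unitary_mat U \<Longrightarrow> (\<lambda>x. adj U ** x ** U) \<in> Aut" by (auto simp: Aut_def)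
      show ?thesis using h(1) a'u mem by blast
    qed
    show "\<forall>x. T x = (\<Sum>l\<in>{..<N}. p l *\<^sub>R (adj (a' l) ** x ** a' l))"
    proof (intro allI mat_eqI)
      fix x a0 c0
      show "T x $ a0 $ c0 = (\<Sum>l\<in>{..<N}. p l *\<^sub>R (adj (a' l) ** x ** a' l)) $ a0 $ c0"
        unfolding Tent conv_entry[where T = "\<lambda>x. (\<Sum>l\<in>{..<N}. p l *\<^sub>R (adj (a' l) ** x ** a' l))", OF allI, OF refl]
        by (rule sum.cong) (auto simp: a'_def)
    qed
  qed (use h in auto)
qed



lemma sum2_delta_P: "(\<Sum>j\<in>UNIV. \<Sum>j'\<in>UNIV. if P \<and> j = b \<and> j' = d then f else 0) = (if P then f else (0::complex))"
  for b :: "'a::finite" and d :: "'b::finite"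
  by (cases P) (simp_all add: sum2_delta[of b d "\<lambda>_ _. f"])

lemma sum4_delta:
  "(\<Sum>i\<in>UNIV. \<Sum>i'\<in>UNIV. \<Sum>j\<in>UNIV. \<Sum>j'\<in>UNIV.
     if (i = a \<and> i' = c) \<and> j = b \<and> j' = d then f else 0) = (f :: complex)"
  for a c :: "'a::finite" and b d :: "'b::finite"
  unfolding sum2_delta_P using sum2_delta[of a c "\<lambda>_ _. f"] by simp

lemma sum4_delta':
  "(\<Sum>i\<in>UNIV. \<Sum>i'\<in>UNIV. \<Sum>j\<in>UNIV. \<Sum>j'\<in>UNIV.
     if i = a \<and> i' = c \<and> j = b \<and> j' = d then f else 0) = (f :: complex)"
  for a c :: "'a::finite" and b d :: "'b::finite"
  using sum4_delta[of a c b d f] by simp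

lemma schur_unit:
  assumes "\<forall>x. T x = (\<chi> i j. B $ i $ j * x $ i $ j)"
  shows "T (unit_mat i i') $ a $ c = (if a = i \<and> c = i' then B $ a $ c else 0)"
  using assms by (simp add: unit_mat_def)

lemma schur_diag1:
  fixes T :: "'n::finite cmat \<Rightarrow> 'n cmat"
  assumes "\<forall>x. T x = (\<chi> i j. B $ i $ j * x $ i $ j)" "T (mat 1) = mat 1"
  shows "B $ a $ a = 1"
proof -
  have "T (mat 1) $ a $ a = 1" using assms(2) mat1_entry[of a a] by simp
  then show ?thesis using assms(1) mat1_entry[of a a] by simp
qed

theorem theorem2p2:
  fixes T :: "'n::finite cmat \<Rightarrow> 'n cmat" and S :: "'k::finite cmat \<Rightarrow> 'k cmat"
  assumes "ucpt_schur T" and "ucpt_schur S"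
  shows "tensor_map T S \<in> conv_maps Aut \<longleftrightarrow> T \<in> conv_maps Aut \<and> S \<in> conv_maps Aut"
proof
  obtain B where TB: "\<forall>x. T x = (\<chi> i j. B $ i $ j * x $ i $ j)" and T1: "T (mat 1) = mat 1"
    using assms(1) unfolding ucpt_schur_def ucpt_def by blast
  obtain C where SC: "\<forall>x. S x = (\<chi> i j. C $ i $ j * x $ i $ j)" and S1: "S (mat 1) = mat 1"
    using assms(2) unfolding ucpt_schur_def ucpt_def by blast
  assume H: "tensor_map T S \<in> conv_maps Aut"
  show "T \<in> conv_maps Aut \<and> S \<in> conv_maps Aut"
  proof
    define j0 :: 'k where "j0 = undefined"
    define e :: "'n \<Rightarrow> 'n \<times> 'k" where "e i = (i, j0)" for i
    have inj: "inj e" by (auto simp: e_def inj_def)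
    show "T \<in> conv_maps Aut"
    proof (rule compress[where e=e and T=T and \<Phi>="tensor_map T S", OF inj H T1])
      fix x a c
      have em: "emb e x $ (a, j0) $ (c, j0) = x $ a $ c" using emb_in[OF inj, of x a c] by (simp add: e_def)
      have sm: "emb e x $ (i, j) $ (i', j') * (T (unit_mat i i') $ a $ c * S (unit_mat j j') $ j0 $ j0)
        = (if (i = a \<and> i' = c) \<and> j = j0 \<and> j' = j0 then B $ a $ c * x $ a $ c else 0)" for i i' j j'
        using em schur_diag1[OF SC S1, of j0] by (auto simp: schur_unit[OF TB] schur_unit[OF SC])
      have "tensor_map T S (emb e x) $ e a $ e c = B $ a $ c * x $ a $ c"
      proof -
        have ea: "e a = (a, j0)" "e c = (c, j0)" by (simp_all add: e_def)
        show ?thesis unfolding ea tensor_map_def by (simp add: cmat_scale_def kron_def sm sum4_delta')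
      qed
      then show "T x $ a $ c = tensor_map T S (emb e x) $ e a $ e c" using TB by simp
    qed
  next
    define i0 :: 'n where "i0 = undefined"
    define e :: "'k \<Rightarrow> 'n \<times> 'k" where "e j = (i0, j)" for j
    have inj: "inj e" by (auto simp: e_def inj_def)
    show "S \<in> conv_maps Aut"
    proof (rule compress[where e=e and T=S and \<Phi>="tensor_map T S", OF inj H S1])
      fix x b d
      have em: "emb e x $ (i0, b) $ (i0, d) = x $ b $ d" using emb_in[OF inj, of x b d] by (simp add: e_def)
      have sm: "emb e x $ (i, j) $ (i', j') * (T (unit_mat i i') $ i0 $ i0 * S (unit_mat j j') $ b $ d)
        = (if (i = i0 \<and> i' = i0) \<and> j = b \<and> j' = d then C $ b $ d * x $ b $ d else 0)" for i i' j j'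
        using em schur_diag1[OF TB T1, of i0] by (auto simp: schur_unit[OF TB] schur_unit[OF SC])
      have "tensor_map T S (emb e x) $ e b $ e d = C $ b $ d * x $ b $ d"
      proof -
        have ea: "e b = (i0, b)" "e d = (i0, d)" by (simp_all add: e_def)
        show ?thesis unfolding ea tensor_map_def by (simp add: cmat_scale_def kron_def sm sum4_delta')
      qed
      then show "S x $ b $ d = tensor_map T S (emb e x) $ e b $ e d" using SC by simp
    qed
  qed
next
  assume "T \<in> conv_maps Aut \<and> S \<in> conv_maps Aut"
  then show "tensor_map T S \<in> conv_maps Aut" using tensor_conv by blast
qed


end
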